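(* The residue hyperfield $Fv$ of a Krasner valued hyperfield $(F,v)$ is a field, i.e. its hyperaddition takes only singleton values.
   Context: A hyperfield is $(F,+,\cdot,0,1)$ with $+$ a multivalued operation making $(F,+,0)$ a canonical hypergroup (associative, commutative, unique inverses $-x$ with $0\in x+(-x)$, and $z\in x+y\Rightarrow y\in z+(-x)$; write $x-y:=x+(-y)$, $A+B:=\bigcup_{a\in A,b\in B}a+b$), $(F,\cdot)$ commutative with $0$ absorbing, $x(y+z)=xy+xz$, and $F\setminus\{0\}$ an abelian group with neutral $1\neq0$. Valuation on $F$: for an ordered abelian group $\Gamma$ and $\infty>\Gamma$ with $\gamma+\infty=\infty+\gamma=\infty$, a surjective map $v:F\to\Gamma\cup\{\infty\}$ with $vx=\infty\iff x=0$, $v(xy)=vx+vy$, $z\in x+y\Rightarrow vz\ge\min\{vx,vy\}$; $vF:=v(F\setminus\{0\})$; $\mathcal{O}_v:=\{x:vx\ge0\}$, $\mathcal{M}_v:=\{x:vx>0\}$. Residue hyperfield: $Fv:=\{x+\mathcal{M}_v: x\in\mathcal{O}_v\}$ where $x+\mathcal{M}_v:=\bigcup_{m\in\mathcal{M}_v}(x+m)$, with hyperaddition $(x+\mathcal{M}_v)\oplus(y+\mathcal{M}_v):=\{z+\mathcal{M}_v:z\in x+y\}$ and multiplication $(x+\mathcal{M}_v)(y+\mathcal{M}_v):=xy+\mathcal{M}_v$; it is a hyperfield. An initial segment of $\Gamma$ is $\rho\subseteq\Gamma$ with $\delta\in\rho,\gamma<\delta\Rightarrow\gamma\in\rho$;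 $\rho+\gamma:=\{\delta+\gamma:\delta\in\rho\}$; "$\alpha>\rho+\gamma$" means $\alpha\notin\rho+\gamma$. Krasner valued hyperfield: a valued hyperfield $(F,v)$ such that (KVH1) for all $x,y\in F$ with $0\notin x+y$, $v(x+y)$ is a singleton; (KVH2) there is an initial segment $\rho_v$ of $vF$ with $0\in\rho_v$ (the norm) such that for all $x,y,z,t\in F$ with $z\in x+y$: $t\in x+y$ iff $vs>\rho_v+\min\{vx,vy\}$ for all $s\in z-t$. *)

theory Defs
  imports Main
begin

definition hneg :: "('a \<Rightarrow> 'a \<Rightarrow> 'a set) \<Rightarrow> 'a \<Rightarrow> 'a \<Rightarrow> 'a" where
  "hneg add z0 x = (THE y. z0 \<in> add x y)"

definition canonical_hypergroup :: "('a \<Rightarrow> 'a \<Rightarrow> 'a set) \<Rightarrow> 'a \<Rightarrow> bool" where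
  "canonical_hypergroup add z0 \<longleftrightarrow>
     (\<forall>x y. add x y \<noteq> {}) \<and>
     (\<forall>x y w. (\<Union>u\<in>add x y. add u w) = (\<Union>u\<in>add y w. add x u)) \<and>
     (\<forall>x y. add x y = add y x) \<and>
     (\<forall>x. add z0 x = {x}) \<and>
     (\<forall>x. \<exists>!y. z0 \<in> add x y) \<and>
     (\<forall>x y z. z \<in> add x y \<longrightarrow> y \<in> add z (hneg add z0 x))"

definition hyperfield ::
  "('a \<Rightarrow> 'a \<Rightarrow> 'a set) \<Rightarrow> ('a \<Rightarrow> 'a \<Rightarrow> 'a) \<Rightarrow> 'a \<Rightarrow> 'a \<Rightarrow> bool" where
  "hyperfield add mul z0 z1 \<longleftrightarrow>
     canonical_hypergroup add z0 \<and>
     (\<forall>x y. mul x y = mul y x) \<and>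
     (\<forall>x y w. mul (mul x y) w = mul x (mul y w)) \<and>
     (\<forall>x. mul z0 x = z0) \<and>
     (\<forall>x y w. mul x ` add y w = add (mul x y) (mul x w)) \<and>
     z1 \<noteq> z0 \<and>
     (\<forall>x. mul z1 x = x) \<and>
     (\<forall>x y. x \<noteq> z0 \<longrightarrow> y \<noteq> z0 \<longrightarrow> mul x y \<noteq> z0) \<and>
     (\<forall>x. x \<noteq> z0 \<longrightarrow> (\<exists>y. y \<noteq> z0 \<and> mul x y = z1))"

section \<open>Gamma \<union> {\<infinity>} modelled as 'g option, None = \<infinity>\<close>

definition ole :: "'g::linordered_ab_group_add option \<Rightarrow> 'g option \<Rightarrow> bool" where
  "ole a b = (case b of None \<Rightarrow> True
                | Some b' \<Rightarrow> (case a of None \<Rightarrow> False | Some a' \<Rightarrow> a' \<le> b'))"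

definition omin :: "'g::linordered_ab_group_add option \<Rightarrow> 'g option \<Rightarrow> 'g option" where
  "omin a b = (if ole a b then a else b)"

definition oplus :: "'g::linordered_ab_group_add option \<Rightarrow> 'g option \<Rightarrow> 'g option" where
  "oplus a b = (case a of None \<Rightarrow> None
                 | Some a' \<Rightarrow> (case b of None \<Rightarrow> None | Some b' \<Rightarrow> Some (a' + b')))"

definition hvaluation ::
  "('a \<Rightarrow> 'a \<Rightarrow> 'a set) \<Rightarrow> ('a \<Rightarrow> 'a \<Rightarrow> 'a) \<Rightarrow> 'a \<Rightarrow> ('a \<Rightarrow> 'g::linordered_ab_group_add option) \<Rightarrow> bool" where
  "hvaluation add mul z0 v \<longleftrightarrow>
     surj v \<and>
     (\<forall>x. v x = None \<longleftrightarrow> x = z0) \<and>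
     (\<forall>x y. v (mul x y) = oplus (v x) (v y)) \<and>
     (\<forall>x y z. z \<in> add x y \<longrightarrow> ole (omin (v x) (v y)) (v z))"

definition val_ring :: "('a \<Rightarrow> 'g::linordered_ab_group_add option) \<Rightarrow> 'a set" where
  "val_ring v = {x. ole (Some 0) (v x)}"

definition val_ideal :: "('a \<Rightarrow> 'g::linordered_ab_group_add option) \<Rightarrow> 'a set" where
  "val_ideal v = {x. \<forall>g. v x = Some g \<longrightarrow> 0 < g}"

definition res_class ::
  "('a \<Rightarrow> 'a \<Rightarrow> 'a set) \<Rightarrow> ('a \<Rightarrow> 'g::linordered_ab_group_add option) \<Rightarrow> 'a \<Rightarrow> 'a set" where
  "res_class add v x = (\<Union>m\<in>val_ideal v. add x m)"

definition residue_carrier ::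
  "('a \<Rightarrow> 'a \<Rightarrow> 'a set) \<Rightarrow> ('a \<Rightarrow> 'g::linordered_ab_group_add option) \<Rightarrow> 'a set set" where
  "residue_carrier add v = res_class add v ` val_ring v"

text \<open>Hyperaddition on Fv: (x+M) (+) (y+M) = {z+M : z \<in> x+y}, taken over all
  representatives x, y in O_v of the given classes.\<close>
definition residue_hadd ::
  "('a \<Rightarrow> 'a \<Rightarrow> 'a set) \<Rightarrow> ('a \<Rightarrow> 'g::linordered_ab_group_add option) \<Rightarrow> 'a set \<Rightarrow> 'a set \<Rightarrow> 'a set set" where
  "residue_hadd add v A B =
     {res_class add v z | z. \<exists>x y. x \<in> val_ring v \<and> y \<in> val_ring v \<and>
        A = res_class add v x \<and> B = res_class add v y \<and> z \<in> add x y}"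

definition initial_segment :: "'g::linordered_ab_group_add set \<Rightarrow> bool" where
  "initial_segment \<rho> \<longleftrightarrow> (\<forall>\<delta>\<in>\<rho>. \<forall>\<gamma>. \<gamma> < \<delta> \<longrightarrow> \<gamma> \<in> \<rho>)"

text \<open>"alpha > rho + gamma" means alpha \<notin> rho + gamma (as a subset of Gamma \<union> {\<infinity>}).\<close>
definition krasner_valued_hyperfield ::
  "('a \<Rightarrow> 'a \<Rightarrow> 'a set) \<Rightarrow> ('a \<Rightarrow> 'a \<Rightarrow> 'a) \<Rightarrow> 'a \<Rightarrow> 'a \<Rightarrow> ('a \<Rightarrow> 'g::linordered_ab_group_add option) \<Rightarrow> bool" where
  "krasner_valued_hyperfield add mul z0 z1 v \<longleftrightarrow>
     hyperfield add mul z0 z1 \<and> hvaluation add mul z0 v \<and>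
     (\<forall>x y. z0 \<notin> add x y \<longrightarrow> (\<exists>a. v ` add x y = {a})) \<and>
     (\<exists>\<rho>. initial_segment \<rho> \<and> 0 \<in> \<rho> \<and>
        (\<forall>x y z t \<gamma>. z \<in> add x y \<longrightarrow> omin (v x) (v y) = Some \<gamma> \<longrightarrow>
           (t \<in> add x y \<longleftrightarrow>
             (\<forall>s\<in>add z (hneg add z0 t). v s \<notin> Some ` ((\<lambda>\<delta>. \<delta> + \<gamma>) ` \<rho>)))))"

end

theory Submission
  imports Defs
begin

lemma omin_None: "omin a b = None \<Longrightarrow> a = None \<and> b = None"
  by (cases a; cases b) (auto simp: omin_def ole_def split: if_splits)

lemma omin_Some: "omin a b = Some g \<Longrightarrow> ole (Some 0) a \<Longrightarrow> ole (Some 0) b \<Longrightarrow> 0 \<le> g"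
  by (cases a; cases b) (auto simp: omin_def ole_def split: if_splits)

locale KH =
  fixes add :: "'a \<Rightarrow> 'a \<Rightarrow> 'a set" and mul :: "'a \<Rightarrow> 'a \<Rightarrow> 'a"
    and z0 z1 :: 'a and v :: "'a \<Rightarrow> 'g::linordered_ab_group_add option"
    and \<rho> :: "'g set"
  assumes ne: "\<And>x y. add x y \<noteq> {}"
    and asc: "\<And>x y w. (\<Union>u\<in>add x y. add u w) = (\<Union>u\<in>add y w. add x u)"
    and cm: "\<And>x y. add x y = add y x"
    and zl: "\<And>x. add z0 x = {x}"
    and inv: "\<And>x. \<exists>!y. z0 \<in> add x y"
    and rev: "\<And>x y z. z \<in> add x y \<Longrightarrow> y \<in> add z (hneg add z0 x)"
    and mcm: "\<And>x y. mul x y = mul y x"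
    and mz: "\<And>x. mul z0 x = z0"
    and dist: "\<And>x y w. mul x ` add y w = add (mul x y) (mul x w)"
    and one: "z1 \<noteq> z0"
    and m1: "\<And>x. mul z1 x = x"
    and vN: "\<And>x. v x = None \<longleftrightarrow> x = z0"
    and vm: "\<And>x y. v (mul x y) = oplus (v x) (v y)"
    and vadd: "\<And>x y z. z \<in> add x y \<Longrightarrow> ole (omin (v x) (v y)) (v z)"
    and iseg: "initial_segment \<rho>" and r0: "0 \<in> \<rho>"
    and kr: "\<And>x y z t \<gamma>. z \<in> add x y \<Longrightarrow> omin (v x) (v y) = Some \<gamma> \<Longrightarrow>
           (t \<in> add x y \<longleftrightarrow>
             (\<forall>s\<in>add z (hneg add z0 t). v s \<notin> Some ` ((\<lambda>\<delta>. \<delta> + \<gamma>) ` \<rho>)))"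
begin

abbreviation N where "N \<equiv> hneg add z0"

lemma N1: "z0 \<in> add x (N x)"
  unfolding hneg_def by (rule theI') (rule inv)

lemma Nuniq: "z0 \<in> add x y \<Longrightarrow> y = N x"
  using inv N1 by blast

lemma NN: "N (N x) = x"
proof -
  have "z0 \<in> add (N x) x" using N1[of x] cm[of x "N x"] by simp
  thus ?thesis using Nuniq[of "N x" x] by simp
qed

lemma mz2: "mul x z0 = z0" using mz mcm by metis
lemma m12: "mul x z1 = x" using m1 mcm by metis

lemma Nmul: "mul x (N z1) = N x"
proof -
  have "mul x z0 \<in> mul x ` add z1 (N z1)" using N1 by blast
  hence "z0 \<in> add x (mul x (N z1))" using dist[of x z1 "N z1"] by (simp add: mz2 m12)
  thus ?thesis using Nuniq by blast
qed

lemma v1: "v z1 = Some 0"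
proof -
  obtain a where a: "v z1 = Some a" using vN one by (cases "v z1") auto
  have "v (mul z1 z1) = Some (a + a)" using vm a by (simp add: oplus_def)
  hence "a + a = a" using a m1 by simp
  thus ?thesis using a by simp
qed

lemma vNeg1: "v (N z1) = Some 0"
proof -
  have mm: "mul (N z1) (N z1) = z1" using Nmul[of "N z1"] NN by simp
  have "N z1 \<noteq> z0"
  proof
    assume "N z1 = z0"
    hence "z0 \<in> add z1 z0" using N1[of z1] by simp
    hence "z0 = z1" using zl[of z1] cm[of z1 z0] by simp
    thus False using one by simp
  qed
  then obtain b where b: "v (N z1) = Some b"
    using vN[of "N z1"] by (cases "v (N z1)") auto
  have "Some (b + b) = Some 0" using vm[of "N z1" "N z1"] v1 b mm by (simp add: oplus_def)
  hence bb: "b + b = 0" by simp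
  have "b = 0"
  proof (rule ccontr)
    assume "b \<noteq> 0"
    hence "b < 0 \<or> 0 < b" by auto
    thus False using bb add_neg_neg[of b b] add_pos_pos[of b b] by auto
  qed
  thus ?thesis using b by simp
qed

lemma vNeg: "v (N x) = v x"
  using vm[of x "N z1"] vNeg1 by (simp add: Nmul oplus_def split: option.splits)

abbreviation M where "M \<equiv> val_ideal v"
abbreviation Ov where "Ov \<equiv> val_ring v"
abbreviation rc where "rc \<equiv> res_class add v"

lemma closeM: "m \<in> M \<Longrightarrow> n \<in> M \<Longrightarrow> k \<in> add m n \<Longrightarrow> k \<in> M"
  using vadd[of k m n]
  unfolding val_ideal_def ole_def omin_def
  by (auto split: option.splits if_splits)

lemma negM: "m \<in> M \<Longrightarrow> N m \<in> M"
  unfolding val_ideal_def using vNeg by simp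

lemma z0M: "z0 \<in> M" unfolding val_ideal_def using vN[of z0] by simp

lemma rc_self: "z \<in> rc z"
  unfolding res_class_def using z0M zl[of z] cm[of z0 z] by blast

lemma rc_sub: "w \<in> rc u \<Longrightarrow> rc w \<subseteq> rc u"
proof
  fix t assume w: "w \<in> rc u" and t: "t \<in> rc w"
  obtain m where m: "m \<in> M" "w \<in> add u m" using w unfolding res_class_def by blast
  obtain m' where m': "m' \<in> M" "t \<in> add w m'" using t unfolding res_class_def by blast
  have "t \<in> (\<Union>a\<in>add u m. add a m')" using m m' by blast
  hence "t \<in> (\<Union>a\<in>add m m'. add u a)" by (rule subst[OF asc[where x=u and y=m and w=m']])
  then obtain b where "b \<in> add m m'" "t \<in> add u b" by blast
  thus "t \<in> rc u" using closeM m m' unfolding res_class_def by blast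
qed

lemma rc_sym: "w \<in> rc u \<Longrightarrow> u \<in> rc w"
proof -
  assume w: "w \<in> rc u"
  obtain m where m: "m \<in> M" "w \<in> add u m" using w unfolding res_class_def by blast
  hence "w \<in> add m u" using cm[of u m] by simp
  hence "u \<in> add w (N m)" by (rule rev)
  thus ?thesis using negM m unfolding res_class_def by blast
qed

lemma rc_eq: "w \<in> rc u \<Longrightarrow> rc w = rc u"
proof -
  assume h: "w \<in> rc u"
  have 1: "rc w \<subseteq> rc u" using rc_sub[OF h] .
  have 2: "rc u \<subseteq> rc w" using rc_sub[OF rc_sym[OF h]] .
  show ?thesis using 1 2 by (rule equalityI)
qed

lemma same_sum:
  assumes x: "x \<in> Ov" and y: "y \<in> Ov" and z: "z \<in> add x y" and z': "z' \<in> add x y"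
  shows "rc z = rc z'"
proof (cases "omin (v x) (v y)")
  case None
  have "v x = None \<and> v y = None" using omin_None[OF None] .
  hence "x = z0" "y = z0" using vN[of x] vN[of y] by simp_all
  thus ?thesis using z z' zl by simp
next
  case (Some \<gamma>)
  have g0: "0 \<le> \<gamma>" using omin_Some[OF Some] x y unfolding val_ring_def by simp
  have H: "\<forall>s\<in>add z (N z'). v s \<notin> Some ` ((\<lambda>\<delta>. \<delta> + \<gamma>) ` \<rho>)"
    using iffD1[OF kr[OF z Some, of z'] z'] .
  obtain s where s: "s \<in> add z (N z')" using ne by blast
  have sM: "s \<in> M"
    unfolding val_ideal_def mem_Collect_eq
  proof (intro allI impI)
    fix a assume a: "v s = Some a"
    show "0 < a"
    proof (rule ccontr)
      assume "\<not> 0 < a"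
      hence "a - \<gamma> \<le> 0" using g0 by simp
      hence "a - \<gamma> \<in> \<rho>"
      proof (cases "a - \<gamma> = 0")
        case True thus ?thesis using r0 by (simp only:)
      next
        case False
        assume le: "a - \<gamma> \<le> 0"
        have lt: "a - \<gamma> < 0" using order.not_eq_order_implies_strict[OF False le] .
        have "\<forall>\<delta>\<in>\<rho>. \<forall>g. g < \<delta> \<longrightarrow> g \<in> \<rho>" using iseg unfolding initial_segment_def .
        thus ?thesis using lt r0 by blast
      qed
      hence "v s \<in> Some ` ((\<lambda>\<delta>. \<delta> + \<gamma>) ` \<rho>)" using a
        by (intro image_eqI[of _ _ a] image_eqI[of _ _ "a - \<gamma>"]) auto
      thus False using H s by blast
    qed
  qed
  have "s \<in> add (N z') z" using s cm[of z "N z'"] by simp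
  hence "z \<in> add s (N (N z'))" by (rule rev)
  hence "z \<in> add s z'" by (simp only: NN)
  hence "z \<in> add z' s" using cm[of s z'] by simp
  hence "z \<in> rc z'" using sM unfolding res_class_def by blast
  thus ?thesis by (rule rc_eq)
qed

lemma main:
  assumes x0: "x0 \<in> Ov" and y0: "y0 \<in> Ov"
  shows "\<exists>C. residue_hadd add v (rc x0) (rc y0) = {C}"
proof -
  obtain c where c: "c \<in> add x0 y0" using ne by blast
  have sub: "Z = rc c" if "Z \<in> residue_hadd add v (rc x0) (rc y0)" for Z
  proof -
    from that have "\<exists>z. Z = rc z \<and> (\<exists>x y. x \<in> Ov \<and> y \<in> Ov \<and>
        rc x0 = rc x \<and> rc y0 = rc y \<and> z \<in> add x y)"
      unfolding residue_hadd_def by (rule CollectD)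
    then obtain z x y where Z: "Z = rc z" and xy: "x \<in> Ov" "y \<in> Ov"
      "rc x0 = rc x" "rc y0 = rc y" and z: "z \<in> add x y"
      by (elim exE conjE)
    have "x \<in> rc x0" using xy(3) rc_self[of x] by simp
    then obtain m where m: "m \<in> M" "x \<in> add x0 m" unfolding res_class_def by blast
    have "y \<in> rc y0" using xy(4) rc_self[of y] by simp
    then obtain n where n: "n \<in> M" "y \<in> add y0 n" unfolding res_class_def by blast
    have "z \<in> (\<Union>a\<in>add x0 m. add a y)" using m(2) z by blast
    hence "z \<in> (\<Union>u\<in>add m y. add x0 u)" by (rule subst[OF asc[where x=x0 and y=m and w=y]])
    then obtain b where b: "b \<in> add m y" "z \<in> add x0 b" by blast
    have "b \<in> add y m" using b(1) cm[of m y] by simp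
    hence "b \<in> (\<Union>a\<in>add y0 n. add a m)" using n(2) by blast
    hence "b \<in> (\<Union>u\<in>add n m. add y0 u)" by (rule subst[OF asc[where x=y0 and y=n and w=m]])
    then obtain d where d: "d \<in> add n m" "b \<in> add y0 d" by blast
    have dM: "d \<in> M" using closeM[OF n(1) m(1) d(1)] .
    have "z \<in> (\<Union>u\<in>add y0 d. add x0 u)" using b(2) d(2) by blast
    hence "z \<in> (\<Union>u\<in>add x0 y0. add u d)" by (rule subst[OF asc[where x=x0 and y=y0 and w=d, symmetric]])
    then obtain u where u: "u \<in> add x0 y0" "z \<in> add u d" by blast
    have "z \<in> rc u" using u(2) dM unfolding res_class_def by blast
    hence "rc z = rc u" by (rule rc_eq)
    also have "\<dots> = rc c" using same_sum[OF x0 y0 u(1) c] .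
    finally show ?thesis using Z by simp
  qed
  have P: "\<exists>x y. x \<in> Ov \<and> y \<in> Ov \<and> rc x0 = rc x \<and> rc y0 = rc y \<and> c \<in> add x y"
  proof (rule exI[of _ x0], rule exI[of _ y0])
    show "x0 \<in> Ov \<and> y0 \<in> Ov \<and> rc x0 = rc x0 \<and> rc y0 = rc y0 \<and> c \<in> add x0 y0"
      using x0 y0 c by simp
  qed
  have "rc c \<in> residue_hadd add v (rc x0) (rc y0)"
    using P unfolding residue_hadd_def by blast
  hence "residue_hadd add v (rc x0) (rc y0) = {rc c}"
  proof (intro equalityI subsetI)
    fix Z assume "Z \<in> residue_hadd add v (rc x0) (rc y0)"
    hence "Z = rc c" by (rule sub)
    thus "Z \<in> {rc c}" by (simp only: singleton_iff)
  next
    fix Z assume "Z \<in> {rc c}"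
    hence "Z = rc c" by (rule singletonD)
    thus "Z \<in> residue_hadd add v (rc x0) (rc y0)" using \<open>rc c \<in> residue_hadd add v (rc x0) (rc y0)\<close> by (rule ssubst)
  qed
  thus ?thesis by (rule exI)
qed

end

theorem proposition4p16:
  fixes add :: "'a \<Rightarrow> 'a \<Rightarrow> 'a set" and mul :: "'a \<Rightarrow> 'a \<Rightarrow> 'a"
    and z0 z1 :: 'a and v :: "'a \<Rightarrow> 'g::linordered_ab_group_add option"
  assumes "krasner_valued_hyperfield add mul z0 z1 v"
  shows "\<forall>A\<in>residue_carrier add v. \<forall>B\<in>residue_carrier add v.
           \<exists>C. residue_hadd add v A B = {C}"
proof -
  have K: "hyperfield add mul z0 z1 \<and> hvaluation add mul z0 v \<and>
     (\<forall>x y. z0 \<notin> add x y \<longrightarrow> (\<exists>a. v ` add x y = {a})) \<and>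
     (\<exists>\<rho>. initial_segment \<rho> \<and> 0 \<in> \<rho> \<and>
        (\<forall>x y z t \<gamma>. z \<in> add x y \<longrightarrow> omin (v x) (v y) = Some \<gamma> \<longrightarrow>
           (t \<in> add x y \<longleftrightarrow>
             (\<forall>s\<in>add z (hneg add z0 t). v s \<notin> Some ` ((\<lambda>\<delta>. \<delta> + \<gamma>) ` \<rho>)))))"
    using assms unfolding krasner_valued_hyperfield_def .
  then obtain \<rho> where hf: "hyperfield add mul z0 z1" and hv: "hvaluation add mul z0 v" and
    r: "initial_segment \<rho>" and r0: "0 \<in> \<rho>" and
    k: "\<forall>x y z t \<gamma>. z \<in> add x y \<longrightarrow> omin (v x) (v y) = Some \<gamma> \<longrightarrow>
           (t \<in> add x y \<longleftrightarrow>
             (\<forall>s\<in>add z (hneg add z0 t). v s \<notin> Some ` ((\<lambda>\<delta>. \<delta> + \<gamma>) ` \<rho>)))"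
    by (elim conjE exE)
  have "KH add mul z0 z1 v \<rho>"
    using hf hv r r0 k
    unfolding KH_def hyperfield_def canonical_hypergroup_def hvaluation_def
    by (elim conjE) (intro conjI; assumption)
  then interpret KH add mul z0 z1 v \<rho> .
  show ?thesis unfolding residue_carrier_def using main by blast
qed

end
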